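(* Let $q$ and $p_0,p_1,\dots,p_N$ be palindromic Laurent polynomials in $\mathbb{R}[t,t^{-1}]$ with $q=\sum_{\ell=0}^{N}p_\ell t^\ell$, and assume that for every $\ell>0$ all coefficients of $p_\ell$ are non-negative. Then $p_\ell=0$ for all $\ell>0$; in particular $q=p_0$.
   Context: A Laurent polynomial $p\in\mathbb{R}[t,t^{-1}]$ is palindromic if $p(t)=p(t^{-1})$. *)

theory Defs
  imports "HOL-Computational_Algebra.Formal_Laurent_Series"
begin

text \<open>Laurent polynomials in R[t,t^-1] are represented as formal Laurent series
  (type real fls, variable fls_X = t) with finitely many nonzero coefficients.\<close>

definition laurent_poly :: "real fls \<Rightarrow> bool" where
  "laurent_poly p \<longleftrightarrow> finite {k. fls_nth p k \<noteq> 0}"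

definition palindromic :: "real fls \<Rightarrow> bool" where
  "palindromic p \<longleftrightarrow> (\<forall>k. fls_nth p k = fls_nth p (-k))"

end

theory Submission
  imports Defs
begin

lemma refl_sum:
  fixes f :: "int \<Rightarrow> real"
  assumes "\<And>k. f k = f (-k)"
  shows "(\<Sum>k\<in>{-R..R}. of_int k * f k) = 0"
proof -
  have i: "inj_on uminus {-R..R}" by (auto intro: inj_onI)
  have im: "uminus ` {-R..R} = {-R..R}"
    by (auto simp: image_iff intro!: bexI[where x="- _"])
  have "(\<Sum>k\<in>{-R..R}. of_int k * f k) = (\<Sum>k\<in>uminus ` {-R..R}. of_int k * f k)"
    using im by simp
  also have "\<dots> = (\<Sum>k\<in>{-R..R}. of_int (-k) * f (-k))"
    by (subst sum.reindex[OF i]) simp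
  also have "\<dots> = - (\<Sum>k\<in>{-R..R}. of_int k * f k)"
    by (simp add: assms[symmetric] sum_negf)
  finally show ?thesis by simp
qed

lemma shift_sum:
  fixes f :: "int \<Rightarrow> real"
  assumes "\<And>k. f k \<noteq> 0 \<Longrightarrow> \<bar>k\<bar> \<le> M" "0 \<le> l" "M + l \<le> R" "0 \<le> M"
  shows "(\<Sum>k\<in>{-R..R}. of_int k * f (k - l)) = (\<Sum>j\<in>{-M..M}. (of_int j + of_int l) * f j)"
proof -
  have i: "inj_on (\<lambda>j. j + l) {-M..M}" by (auto intro: inj_onI)
  have im: "(\<lambda>j. j + l) ` {-M..M} = {-M+l..M+l}"
    by (auto simp: image_iff intro!: bexI[where x="_ - l"])
  have "(\<Sum>j\<in>{-M..M}. (of_int j + of_int l) * f j) = (\<Sum>k\<in>(\<lambda>j. j + l) ` {-M..M}. of_int k * f (k - l))"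
    by (subst sum.reindex[OF i]) simp
  also have "\<dots> = (\<Sum>k\<in>{-M+l..M+l}. of_int k * f (k - l))" using im by simp
  also have "\<dots> = (\<Sum>k\<in>{-R..R}. of_int k * f (k - l))"
  proof (rule sum.mono_neutral_left)
    show "\<forall>i\<in>{- R..R} - {- M + l..M + l}. real_of_int i * f (i - l) = 0"
    proof
      fix i assume "i \<in> {- R..R} - {- M + l..M + l}"
      hence "\<bar>i - l\<bar> > M" by auto
      thus "real_of_int i * f (i - l) = 0" using assms(1)[of "i-l"] by force
    qed
  qed (use assms in auto)
  finally show ?thesis by simp
qed

theorem lemma6p4:
  fixes q :: "real fls" and p :: "nat \<Rightarrow> real fls" and N :: nat
  assumes "laurent_poly q" and "palindromic q"
    and "\<forall>l\<le>N. laurent_poly (p l)" and "\<forall>l\<le>N. palindromic (p l)"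
    and "q = (\<Sum>l\<le>N. p l * fls_X ^ l)"
    and "\<forall>l\<in>{1..N}. \<forall>k. fls_nth (p l) k \<ge> 0"
  shows "(\<forall>l\<in>{1..N}. p l = 0) \<and> q = p 0"
proof -
  define S where "S = (\<Union>l\<le>N. {k. fls_nth (p l) k \<noteq> 0})"
  have fS: "finite S" using assms(3) unfolding S_def laurent_poly_def by auto
  define M where "M = Max (insert 0 (abs ` S))"
  have M0: "0 \<le> M" unfolding M_def using fS by simp
  have Mb: "\<bar>k\<bar> \<le> M" if "l \<le> N" "fls_nth (p l) k \<noteq> 0" for l k
  proof -
    have "k \<in> S" using that unfolding S_def by auto
    thus ?thesis unfolding M_def using fS by (intro Max_ge) auto
  qed
  define R where "R = M + int N"
  define Sl where "Sl l = (\<Sum>j\<in>{-M..M}. fls_nth (p l) j)" for l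
  have W: "(\<Sum>k\<in>{-R..R}. of_int k * fls_nth (p l * fls_X ^ l) k) = of_nat l * Sl l"
    if "l \<le> N" for l
  proof -
    have "(\<Sum>k\<in>{-R..R}. of_int k * fls_nth (p l * fls_X ^ l) k)
        = (\<Sum>k\<in>{-R..R}. of_int k * fls_nth (p l) (k - int l))"
      by (simp add: fls_X_power_times_conv_shift)
    also have "\<dots> = (\<Sum>j\<in>{-M..M}. (of_int j + of_int (int l)) * fls_nth (p l) j)"
      by (rule shift_sum) (use Mb that M0 R_def in auto)
    also have "\<dots> = (\<Sum>j\<in>{-M..M}. of_int j * fls_nth (p l) j) + of_nat l * Sl l"
      by (simp only: distrib_right sum.distrib Sl_def sum_distrib_left of_int_of_nat_eq)
    also have "(\<Sum>j\<in>{-M..M}. of_int j * fls_nth (p l) j) = 0"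
      using assms(4) that unfolding palindromic_def by (intro refl_sum) blast
    finally show ?thesis by simp
  qed
  have "0 = (\<Sum>k\<in>{-R..R}. of_int k * fls_nth q k)"
    using assms(2) unfolding palindromic_def by (intro refl_sum[symmetric]) blast
  also have "\<dots> = (\<Sum>l\<le>N. (\<Sum>k\<in>{-R..R}. of_int k * fls_nth (p l * fls_X ^ l) k))"
    unfolding assms(5) fls_nth_sum sum_distrib_left by (rule sum.swap)
  also have "\<dots> = (\<Sum>l\<le>N. of_nat l * Sl l)" using W by simp
  finally have Z: "(\<Sum>l\<le>N. of_nat l * Sl l) = 0" by simp
  have nn: "\<forall>l\<in>{..N}. 0 \<le> of_nat l * Sl l"
  proof
    fix l assume "l \<in> {..N}"
    show "0 \<le> of_nat l * Sl l"
    proof (cases "l = 0")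
      case False
      hence "l \<in> {1..N}" using \<open>l \<in> {..N}\<close> by auto
      thus ?thesis using assms(6) unfolding Sl_def by (intro mult_nonneg_nonneg of_nat_0_le_iff sum_nonneg) auto
    qed simp
  qed
  have Z2: "\<forall>l\<in>{..N}. of_nat l * Sl l = 0"
    using Z nn sum_nonneg_eq_0_iff[of "{..N}" "\<lambda>l. of_nat l * Sl l"] by auto
  have P: "p l = 0" if l: "l \<in> {1..N}" for l
  proof -
    have lN: "l \<in> {..N}" and l0: "l \<noteq> 0" using l by auto
    have "of_nat l * Sl l = 0" using bspec[OF Z2 lN] .
    hence "Sl l = 0" using l0 by simp
    hence z: "\<forall>j\<in>{-M..M}. fls_nth (p l) j = 0"
      unfolding Sl_def using assms(6) l by (subst (asm) sum_nonneg_eq_0_iff) auto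
    show ?thesis
    proof (rule fls_eqI)
      fix k
      show "fls_nth (p l) k = fls_nth 0 k"
      proof (cases "fls_nth (p l) k = 0")
        case False
        hence "\<bar>k\<bar> \<le> M" using Mb l by auto
        hence "k \<in> {-M..M}" by auto
        thus ?thesis using z by simp
      qed simp
    qed
  qed
  have "q = (\<Sum>l\<in>insert 0 {1..N}. p l * fls_X ^ l)"
    using assms(5) by (simp add: atLeast0AtMost[symmetric] atLeastAtMost_insertL)
  also have "\<dots> = p 0" using P by simp
  finally show ?thesis using P by simp
qed

end
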